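(* Under the hypotheses and notation of the previous statement (real-valued $w$, $\lim_{x\to\pm\infty}w=\mp k_0$, $k_0>0$, transfer matrix $M(k)$ defined through the Jost solutions of $-\psi''+(-w^2-iw'+k_0^2)\psi=k^2\psi$), assume moreover that $M_{11}$ and $M_{22}$ are differentiable at $k=k_0$. Then $$M_{11}(k_0)=2k_0\,\overline{M_{22}'(k_0)}.$$ Consequently the spectral singularity at $k_0$ (where $M_{22}(k_0)=0$ always) is self-dual, i.e. $M_{11}(k_0)=0$, if and only if $M_{22}'(k_0)=0$, i.e. iff $k_0$ is a zero of $M_{22}$ of order at least two.
   Context: The transfer matrix $M(k)$ relates left Jost solutions ($\phi_1^L\sim e^{ikx}$, $\phi_2^L\sim e^{-ikx}$ at $-\infty$) and right Jost solutions ($\phi_1^R\sim e^{ikx}$, $\phi_2^R\sim e^{-ikx}$ at $+\infty$) via $\phi_1^L=M_{11}\phi_1^R+M_{21}\phi_2^R$, $\phi_2^L=M_{12}\phi_1^R+M_{22}\phi_2^R$. Overline denotes complex conjugation, prime denotes derivative in $k$. *)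

theory Defs
  imports "HOL-Analysis.Analysis"
begin

definition pot :: "(real \<Rightarrow> real) \<Rightarrow> (real \<Rightarrow> real) \<Rightarrow> real \<Rightarrow> real \<Rightarrow> complex" where
  "pot w w' k0 x = - (complex_of_real (w x))\<^sup>2 - \<i> * complex_of_real (w' x) + (complex_of_real k0)\<^sup>2"

definition schrod_sol :: "(real \<Rightarrow> complex) \<Rightarrow> real \<Rightarrow> (real \<Rightarrow> complex) \<Rightarrow> bool" where
  "schrod_sol V k \<phi> \<longleftrightarrow>
     (\<exists>\<phi>' \<phi>''. \<forall>x. (\<phi> has_vector_derivative \<phi>' x) (at x) \<and>
                    (\<phi>' has_vector_derivative \<phi>'' x) (at x) \<and>
                    - \<phi>'' x + V x * \<phi> x = (complex_of_real k)\<^sup>2 * \<phi> x)"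

definition asymp_exp :: "(real \<Rightarrow> complex) \<Rightarrow> real \<Rightarrow> real filter \<Rightarrow> bool" where
  "asymp_exp \<phi> s F \<longleftrightarrow> ((\<lambda>x. \<phi> x - exp (\<i> * complex_of_real s * complex_of_real x)) \<longlongrightarrow> 0) F"

text \<open>M11, M12, M21, M22 are the entries of the transfer matrix of V (for real k > 0):
  phi1L = M11 phi1R + M21 phi2R and phi2L = M12 phi1R + M22 phi2R, where
  phi1L ~ e^{ikx}, phi2L ~ e^{-ikx} at -infinity and phi1R ~ e^{ikx}, phi2R ~ e^{-ikx} at +infinity
  are the Jost solutions.\<close>
definition is_transfer_matrix ::
  "(real \<Rightarrow> complex) \<Rightarrow> (real \<Rightarrow> complex) \<Rightarrow> (real \<Rightarrow> complex) \<Rightarrow> (real \<Rightarrow> complex)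
     \<Rightarrow> (real \<Rightarrow> complex) \<Rightarrow> bool" where
  "is_transfer_matrix V M11 M12 M21 M22 \<longleftrightarrow>
     (\<forall>k>0. \<exists>\<phi>1L \<phi>2L \<phi>1R \<phi>2R.
        schrod_sol V k \<phi>1L \<and> schrod_sol V k \<phi>2L \<and> schrod_sol V k \<phi>1R \<and> schrod_sol V k \<phi>2R \<and>
        asymp_exp \<phi>1L k at_bot \<and> asymp_exp \<phi>2L (- k) at_bot \<and>
        asymp_exp \<phi>1R k at_top \<and> asymp_exp \<phi>2R (- k) at_top \<and>
        (\<forall>x. \<phi>1L x = M11 k * \<phi>1R x + M21 k * \<phi>2R x) \<and>
        (\<forall>x. \<phi>2L x = M12 k * \<phi>1R x + M22 k * \<phi>2R x))"

end

theory Submission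
  imports Defs
begin


definition good :: "(real \<Rightarrow> complex) \<Rightarrow> bool" where
  "good V \<longleftrightarrow> (\<forall>a b. (\<lambda>x. norm (V x)) integrable_on {a..b}) \<and>
     (\<forall>e>0. \<exists>B>0. \<forall>a b. (b \<le> -B \<or> B \<le> a) \<longrightarrow> integral {a..b} (\<lambda>x. norm (V x)) \<le> e)"

lemma good_int: "good V \<Longrightarrow> (\<lambda>x. norm (V x)) integrable_on {a..b}"
  by (simp add: good_def)

lemma good_tail: "good V \<Longrightarrow> e > 0 \<Longrightarrow> \<exists>B>0. \<forall>a b. (b \<le> -B \<or> B \<le> a) \<longrightarrow> integral {a..b} (\<lambda>x. norm (V x)) \<le> e"
  by (simp add: good_def)

lemma absint_good:
  assumes V: "V absolutely_integrable_on UNIV"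
  shows "good V"
proof -
  define f where "f = (\<lambda>x. norm (V x))"
  have fint: "f integrable_on UNIV" using V unfolding absolutely_integrable_on_def f_def by auto
  have fsub: "f integrable_on {a..b}" for a b
    by (rule integrable_on_subinterval[OF fint]) auto
  have fnn: "\<forall>x. 0 \<le> f x" by (simp add: f_def)
  define T where "T = integral UNIV f"
  have fT: "(f has_integral T) UNIV" using fint T_def by auto
  have leT: "integral {a..b} f \<le> T" for a b
    unfolding T_def by (rule integral_subset_le) (use fsub fint fnn in auto)
  have "\<exists>B>0. \<forall>a b. (b \<le> -B \<or> B \<le> a) \<longrightarrow> integral {a..b} f \<le> e" if e: "e > 0" for e
  proof -
    have nb: "\<not> (\<exists>a b. (UNIV::real set) = cbox a b)"
      by (metis bounded_cbox not_bounded_UNIV)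
    obtain B where B: "B > 0" and
      Bp: "\<forall>a b. ball 0 B \<subseteq> cbox a b \<longrightarrow>
      (\<exists>z. ((\<lambda>x. if x \<in> UNIV then f(x) else 0) has_integral z) (cbox a b) \<and> norm(z - T) < e)"
      using has_integral_altD[OF fT nb e] by blast
    have big: "integral {a..b} f > T - e" if "a \<le> -B" "B \<le> b" for a b
    proof -
      have "ball 0 B \<subseteq> cbox a b" using that by (auto simp: dist_real_def)
      then obtain z where z: "(f has_integral z) {a..b}" "\<bar>z - T\<bar> < e" using Bp by (simp add: box_real) blast
      then have "integral {a..b} f = z" by (simp add: integral_unique)
      then show ?thesis using z by auto
    qed
    show ?thesis
    proof (intro exI[of _ B] conjI allI impI B)
      fix a b :: real assume ab: "b \<le> -B \<or> B \<le> a"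
      show "integral {a..b} f \<le> e"
      proof (cases "a \<le> b")
        case False then show ?thesis using e by simp
      next
        case True
        show ?thesis
        proof (cases "b \<le> -B")
          case True
          have c: "integral {a..b} f + integral {b..B} f = integral {a..B} f"
            using Henstock_Kurzweil_Integration.integral_combine[where a=a and c=b and b=B and f=f] True \<open>a \<le> b\<close> B fsub by auto
          have "integral {-B..B} f \<le> integral {b..B} f"
            by (rule integral_subset_le) (use True fsub fnn in auto)
          with big[of "-B" B] leT[of a B] c B show ?thesis by auto
        next
          case False
          then have aB: "B \<le> a" using ab by auto
          have c: "integral {-B..a} f + integral {a..b} f = integral {-B..b} f"
            using Henstock_Kurzweil_Integration.integral_combine[where a="-B" and c=a and b=b and f=f] aB \<open>a \<le> b\<close> B fsub by auto
          have "integral {-B..B} f \<le> integral {-B..a} f"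
            by (rule integral_subset_le) (use aB fsub fnn in auto)
          with big[of "-B" B] leT[of "-B" b] c B show ?thesis by auto
        qed
      qed
    qed
  qed
  then show ?thesis unfolding good_def f_def using fsub f_def by auto
qed

lemma good_reflect: "good V \<Longrightarrow> good (\<lambda>x. V (-x))"
proof -
  assume g: "good V"
  have i: "(\<lambda>x. norm (V (-x))) integrable_on {a..b}" for a b
  proof -
    have "(\<lambda>x. norm (V x)) integrable_on {-b..-a}" using good_int[OF g] .
    then show ?thesis using Henstock_Kurzweil_Integration.integrable_reflect_real[where f="\<lambda>x. norm (V x)" and a="-b" and b="-a"] by simp
  qed
  have "\<exists>B>0. \<forall>a b. (b \<le> -B \<or> B \<le> a) \<longrightarrow> integral {a..b} (\<lambda>x. norm (V (-x))) \<le> e" if e0: "e>0" for e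
  proof -
    obtain B where B: "B>0" "\<forall>a b. (b \<le> -B \<or> B \<le> a) \<longrightarrow> integral {a..b} (\<lambda>x. norm (V x)) \<le> e"
      using good_tail[OF g e0] by auto
    have "integral {a..b} (\<lambda>x. norm (V (-x))) = integral {-b..-a} (\<lambda>x. norm (V x))" for a b
      using Henstock_Kurzweil_Integration.integral_reflect_real[where f="\<lambda>x. norm (V x)" and a="-b" and b="-a"] by simp
    then show ?thesis using B by (intro exI[of _ B]) auto
  qed
  then show ?thesis using i unfolding good_def by auto
qed



lemma deriv_bound:
  fixes u u' u'' :: "real \<Rightarrow> complex" and g :: "real \<Rightarrow> real"
  assumes d1: "\<forall>t. (u has_vector_derivative u' t) (at t)"
    and d2: "\<forall>t. (u' has_vector_derivative u'' t) (at t)"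
    and gb: "\<forall>t\<in>{x..x+1}. norm (u'' t) \<le> g t" and gi: "g integrable_on {x..x+1}"
  shows "norm (u' x) \<le> norm (u (x+1)) + norm (u x) + integral {x..x+1} g"
proof -
  define G where "G = integral {x..x+1} g"
  have gnn: "\<forall>t\<in>{x..x+1}. 0 \<le> g t" using gb norm_ge_zero order_trans by blast
  have step: "norm (u' t - u' x) \<le> G" if t: "t \<in> {x..x+1}" for t
  proof -
    have "(u'' has_integral (u' t - u' x)) {x..t}"
      by (rule fundamental_theorem_of_calculus) (use t d2 in \<open>auto intro: has_vector_derivative_at_within\<close>)
    then have i1: "u'' integrable_on {x..t}" and i2: "integral {x..t} u'' = u' t - u' x"
      by (auto simp: integral_unique)
    have gi2: "g integrable_on {x..t}" by (rule integrable_on_subinterval[OF gi]) (use t in auto)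
    have "norm (integral {x..t} u'') \<le> integral {x..t} g"
      by (rule integral_norm_bound_integral[OF i1 gi2]) (use gb t in auto)
    also have "\<dots> \<le> G" unfolding G_def
      by (rule integral_subset_le) (use t gi gi2 gnn in auto)
    finally show ?thesis using i2 by simp
  qed
  have "((\<lambda>t. u' t - u' x) has_integral
         ((u (x+1) - of_real (x+1) * u' x) - (u x - of_real x * u' x))) {x..x+1}"
  proof (rule fundamental_theorem_of_calculus)
    fix t assume "t \<in> {x..x+1}"
    have "((\<lambda>t. u t - of_real t * u' x) has_vector_derivative (u' t - 1 * u' x)) (at t)"
      by (intro derivative_intros d1[rule_format]) (auto intro: derivative_eq_intros)
    then show "((\<lambda>t. u t - of_real t * u' x) has_vector_derivative (u' t - u' x)) (at t within {x..x+1})"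
      by (auto intro: has_vector_derivative_at_within)
  qed simp
  then have hi: "((\<lambda>t. u' t - u' x) has_integral (u (x+1) - u x - u' x)) (cbox x (x+1))"
    by (simp add: algebra_simps)
  have G0: "0 \<le> G" using step[of x] by (auto intro: order_trans[OF norm_ge_zero])
  have "norm (u (x+1) - u x - u' x) \<le> G * measure lborel (cbox x (x+1))"
    by (rule has_integral_bound[OF G0 hi]) (use step in auto)
  then have b: "norm (u (x+1) - u x - u' x) \<le> G" by simp
  have "norm (u' x) \<le> norm (u (x+1) - u x) + norm (u (x+1) - u x - u' x)"
    by (metis norm_triangle_ineq4 diff_diff_eq2 diff_zero add.commute norm_minus_commute
          cancel_comm_monoid_add_class.diff_cancel diff_add_cancel norm_triangle_sub)
  also have "\<dots> \<le> norm (u (x+1)) + norm (u x) + G"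
    using b norm_triangle_ineq4[of "u (x+1)" "u x"] by linarith
  finally show ?thesis unfolding G_def .
qed



lemma D_common:
  fixes u u' u'' p V :: "real \<Rightarrow> complex" and k P \<delta> eV x :: real
  assumes g: "good V"
    and d1: "\<forall>t. (u has_vector_derivative u' t) (at t)"
    and d2: "\<forall>t. (u' has_vector_derivative u'' t) (at t)"
    and eq: "\<forall>t. u'' t = V t * p t - (of_real k)^2 * u t"
    and pb: "\<forall>t\<in>{x..x+1}. norm (p t) \<le> P"
    and ub: "\<forall>t\<in>{x..x+1}. norm (u t) < \<delta>"
    and vb: "integral {x..x+1} (\<lambda>t. norm (V t)) \<le> eV"
    and P0: "0 \<le> P"
  shows "norm (u' x) \<le> \<delta> + \<delta> + P * eV + k^2 * \<delta>"
proof -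
  define g where "g = (\<lambda>t. P * norm (V t) + k^2 * \<delta>)"
  have gi: "g integrable_on {x..x+1}"
    unfolding g_def by (intro integrable_add integrable_on_mult_right good_int[OF assms(1)] integrable_const_ivl)
  have gb: "\<forall>t\<in>{x..x+1}. norm (u'' t) \<le> g t"
  proof
    fix t assume t: "t \<in> {x..x+1}"
    have "norm (u'' t) \<le> norm (V t) * norm (p t) + k^2 * norm (u t)"
      using eq norm_triangle_ineq4[of "V t * p t" "(of_real k)^2 * u t"]
      by (simp add: norm_mult norm_power)
    also have "\<dots> \<le> norm (V t) * P + k^2 * \<delta>"
      using pb ub t by (intro add_mono mult_left_mono mult_left_mono) (auto intro: less_imp_le)
    finally show "norm (u'' t) \<le> g t" by (simp add: g_def mult.commute)
  qed
  have "norm (u' x) \<le> norm (u (x+1)) + norm (u x) + integral {x..x+1} g"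
    by (rule deriv_bound[OF d1 d2 gb gi])
  moreover have "integral {x..x+1} g = P * integral {x..x+1} (\<lambda>t. norm (V t)) + k^2 * \<delta>"
    unfolding g_def
    by (subst integral_add) (auto intro: integrable_on_mult_right good_int[OF assms(1)] simp: integral_mult_right)
  moreover have "P * integral {x..x+1} (\<lambda>t. norm (V t)) \<le> P * eV" using vb P0 by (rule mult_left_mono)
  moreover have "norm (u (x+1)) < \<delta>" "norm (u x) < \<delta>" using ub by auto
  ultimately show ?thesis by linarith
qed

lemma D_bot:
  fixes u u' u'' p V :: "real \<Rightarrow> complex" and k P :: real
  assumes g: "good V"
    and d1: "\<forall>t. (u has_vector_derivative u' t) (at t)"
    and d2: "\<forall>t. (u' has_vector_derivative u'' t) (at t)"
    and eq: "\<forall>t. u'' t = V t * p t - (of_real k)^2 * u t"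
    and pb: "eventually (\<lambda>t. norm (p t) \<le> P) at_bot"
    and ul: "(u \<longlongrightarrow> 0) at_bot"
  shows "(u' \<longlongrightarrow> 0) at_bot"
proof (rule tendstoI)
  fix \<epsilon> :: real assume \<epsilon>: "\<epsilon> > 0"
  obtain N0 where N0: "\<forall>t\<le>N0. norm (p t) \<le> P" using pb by (auto simp: eventually_at_bot_linorder)
  have P0: "0 \<le> P" using N0 norm_ge_zero order_trans by blast
  define \<delta> where "\<delta> = \<epsilon> / (4 * (2 + k^2))"
  have \<delta>: "\<delta> > 0" using \<epsilon> by (simp add: \<delta>_def add_pos_nonneg)
  obtain N1 where N1: "\<forall>t\<le>N1. norm (u t) < \<delta>"
    using tendstoD[OF ul \<delta>] by (auto simp: eventually_at_bot_linorder)
  define eV where "eV = \<epsilon> / (4 * (P + 1))"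
  have eV: "eV > 0" using \<epsilon> P0 by (simp add: eV_def)
  obtain B where B: "B > 0" "\<forall>a b. (b \<le> -B \<or> B \<le> a) \<longrightarrow> integral {a..b} (\<lambda>x. norm (V x)) \<le> eV"
    using good_tail[OF g eV] by auto
  show "eventually (\<lambda>x. dist (u' x) 0 < \<epsilon>) at_bot"
    unfolding eventually_at_bot_linorder
  proof (intro exI[of _ "min N0 (min N1 (-B)) - 1"] allI impI)
    fix x assume x: "x \<le> min N0 (min N1 (-B)) - 1"
    have "norm (u' x) \<le> \<delta> + \<delta> + P * eV + k^2 * \<delta>"
      by (rule D_common[OF g d1 d2 eq _ _ _ P0]) (use x N0 N1 B in auto)
    also have "\<dots> < \<epsilon>"
    proof -
      have "0 < 2 + k^2" by (simp add: add_pos_nonneg)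
      then have "(2 + k^2) * \<delta> = \<epsilon> / 4" unfolding \<delta>_def by (simp add: field_simps)
      moreover have "P * eV < \<epsilon> / 2" unfolding eV_def using P0 \<epsilon>
        by (simp add: field_simps) (simp add: add_pos_nonneg)
      moreover have "\<delta> + \<delta> + P * eV + k^2 * \<delta> = (2 + k^2) * \<delta> + P * eV" by (simp add: algebra_simps)
      ultimately show ?thesis using \<epsilon> by linarith
    qed
    finally show "dist (u' x) 0 < \<epsilon>" by simp
  qed
qed

lemma D_top:
  fixes u u' u'' p V :: "real \<Rightarrow> complex" and k P :: real
  assumes g: "good V"
    and d1: "\<forall>t. (u has_vector_derivative u' t) (at t)"
    and d2: "\<forall>t. (u' has_vector_derivative u'' t) (at t)"
    and eq: "\<forall>t. u'' t = V t * p t - (of_real k)^2 * u t"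
    and pb: "eventually (\<lambda>t. norm (p t) \<le> P) at_top"
    and ul: "(u \<longlongrightarrow> 0) at_top"
  shows "(u' \<longlongrightarrow> 0) at_top"
proof (rule tendstoI)
  fix \<epsilon> :: real assume \<epsilon>: "\<epsilon> > 0"
  obtain N0 where N0: "\<forall>t\<ge>N0. norm (p t) \<le> P" using pb by (auto simp: eventually_at_top_linorder)
  have P0: "0 \<le> P" using N0 norm_ge_zero order_trans by blast
  define \<delta> where "\<delta> = \<epsilon> / (4 * (2 + k^2))"
  have \<delta>: "\<delta> > 0" using \<epsilon> by (simp add: \<delta>_def add_pos_nonneg)
  obtain N1 where N1: "\<forall>t\<ge>N1. norm (u t) < \<delta>"
    using tendstoD[OF ul \<delta>] by (auto simp: eventually_at_top_linorder)
  define eV where "eV = \<epsilon> / (4 * (P + 1))"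
  have eV: "eV > 0" using \<epsilon> P0 by (simp add: eV_def)
  obtain B where B: "B > 0" "\<forall>a b. (b \<le> -B \<or> B \<le> a) \<longrightarrow> integral {a..b} (\<lambda>x. norm (V x)) \<le> eV"
    using good_tail[OF g eV] by auto
  show "eventually (\<lambda>x. dist (u' x) 0 < \<epsilon>) at_top"
    unfolding eventually_at_top_linorder
  proof (intro exI[of _ "max N0 (max N1 B)"] allI impI)
    fix x assume x: "x \<ge> max N0 (max N1 B)"
    have "norm (u' x) \<le> \<delta> + \<delta> + P * eV + k^2 * \<delta>"
      by (rule D_common[OF g d1 d2 eq _ _ _ P0]) (use x N0 N1 B in auto)
    also have "\<dots> < \<epsilon>"
    proof -
      have "0 < 2 + k^2" by (simp add: add_pos_nonneg)
      then have "(2 + k^2) * \<delta> = \<epsilon> / 4" unfolding \<delta>_def by (simp add: field_simps)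
      moreover have "P * eV < \<epsilon> / 2" unfolding eV_def using P0 \<epsilon>
        by (simp add: field_simps) (simp add: add_pos_nonneg)
      moreover have "\<delta> + \<delta> + P * eV + k^2 * \<delta> = (2 + k^2) * \<delta> + P * eV" by (simp add: algebra_simps)
      ultimately show ?thesis using \<epsilon> by linarith
    qed
    finally show "dist (u' x) 0 < \<epsilon>" by simp
  qed
qed



definition isol :: "(real \<Rightarrow> complex) \<Rightarrow> real \<Rightarrow> (real \<Rightarrow> complex) \<Rightarrow> (real \<Rightarrow> complex) \<Rightarrow> bool" where
  "isol V k \<psi> \<psi>' \<longleftrightarrow> (\<forall>x. (\<psi> has_vector_derivative \<psi>' x) (at x)) \<and>
      (\<forall>x. (\<psi>' has_vector_derivative ((V x - (of_real k)^2) * \<psi> x)) (at x))"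

definition En :: "real \<Rightarrow> (real \<Rightarrow> complex) \<Rightarrow> (real \<Rightarrow> complex) \<Rightarrow> real \<Rightarrow> real" where
  "En k \<psi> \<psi>' t = k^2 * (norm (\<psi> t))^2 + (norm (\<psi>' t))^2"

lemma En_nonneg: "0 \<le> En k \<psi> \<psi>' t"
  by (simp add: En_def)

lemma En_zero: "k > 0 \<Longrightarrow> En k \<psi> \<psi>' t = 0 \<Longrightarrow> \<psi> t = 0 \<and> \<psi>' t = 0"
  unfolding En_def by (metis add_nonneg_eq_0_iff mult_eq_0_iff norm_eq_zero power_eq_0_iff
      zero_le_power2 mult_nonneg_nonneg order_less_irrefl)

lemma En_deriv:
  assumes s: "isol V k \<psi> \<psi>'"
  shows "((\<lambda>t. of_real (En k \<psi> \<psi>' t)::complex) has_vector_derivative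
          (\<psi>' t * cnj (V t) * cnj (\<psi> t) + V t * \<psi> t * cnj (\<psi>' t))) (at t)"
proof -
  have eq: "(\<lambda>t. of_real (En k \<psi> \<psi>' t)::complex) =
     (\<lambda>t. of_real (k^2) * (\<psi> t * cnj (\<psi> t)) + \<psi>' t * cnj (\<psi>' t))"
    by (rule ext) (simp add: En_def complex_norm_square[symmetric])
  have d1: "(\<psi> has_vector_derivative \<psi>' t) (at t)" and
       d2: "(\<psi>' has_vector_derivative ((V t - (of_real k)^2) * \<psi> t)) (at t)"
    using s by (auto simp: isol_def)
  have "((\<lambda>t. of_real (k^2) * (\<psi> t * cnj (\<psi> t)) + \<psi>' t * cnj (\<psi>' t)) has_vector_derivative
     (of_real (k^2) * (\<psi> t * cnj (\<psi>' t) + \<psi>' t * cnj (\<psi> t)) +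
      (\<psi>' t * cnj ((V t - (of_real k)^2) * \<psi> t) + (V t - (of_real k)^2) * \<psi> t * cnj (\<psi>' t)))) (at t)"
    by (intro derivative_intros d1 d2)
  moreover have "of_real (k^2) * (\<psi> t * cnj (\<psi>' t) + \<psi>' t * cnj (\<psi> t)) +
      (\<psi>' t * cnj ((V t - (of_real k)^2) * \<psi> t) + (V t - (of_real k)^2) * \<psi> t * cnj (\<psi>' t))
     = \<psi>' t * cnj (V t) * cnj (\<psi> t) + V t * \<psi> t * cnj (\<psi>' t)"
    by (simp add: algebra_simps)
  ultimately show ?thesis unfolding eq by simp
qed

lemma En_deriv_bound:
  assumes k: "k > 0"
  shows "norm (\<psi>' t * cnj (V t) * cnj (\<psi> t) + V t * \<psi> t * cnj (\<psi>' t)) \<le> norm (V t) * En k \<psi> \<psi>' t / k"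
proof -
  have "norm (\<psi>' t * cnj (V t) * cnj (\<psi> t) + V t * \<psi> t * cnj (\<psi>' t))
     \<le> norm (\<psi>' t * cnj (V t) * cnj (\<psi> t)) + norm (V t * \<psi> t * cnj (\<psi>' t))"
    by (rule norm_triangle_ineq)
  also have "\<dots> = norm (V t) * (2 * norm (\<psi> t) * norm (\<psi>' t))"
    by (simp add: norm_mult algebra_simps)
  also have "\<dots> \<le> norm (V t) * (En k \<psi> \<psi>' t / k)"
  proof (rule mult_left_mono)
    have "0 \<le> (k * norm (\<psi> t) - norm (\<psi>' t))^2" by simp
    then have "2 * k * norm (\<psi> t) * norm (\<psi>' t) \<le> En k \<psi> \<psi>' t"
      unfolding En_def by (simp add: power2_eq_square algebra_simps)
    then show "2 * norm (\<psi> t) * norm (\<psi>' t) \<le> En k \<psi> \<psi>' t / k"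
      using k by (simp add: field_simps)
  qed simp
  finally show ?thesis by simp
qed

lemma En_cont:
  assumes s: "isol V k \<psi> \<psi>'"
  shows "continuous_on A (En k \<psi> \<psi>')"
proof -
  have "continuous_on A (\<lambda>t. of_real (En k \<psi> \<psi>' t)::complex)"
  proof (rule continuous_at_imp_continuous_on, rule ballI)
    fix t show "isCont (\<lambda>t. of_real (En k \<psi> \<psi>' t)::complex) t"
      using has_vector_derivative_continuous[OF En_deriv[OF s, of t]] .
  qed
  then have "continuous_on A (\<lambda>t. norm (of_real (En k \<psi> \<psi>' t)::complex))"
    by (rule continuous_on_norm)
  then show ?thesis by (simp add: En_nonneg)
qed

lemma energy_step:
  assumes g: "good V" and k: "k > 0" and s: "isol V k \<psi> \<psi>'" and yx: "y \<le> x"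
    and M: "\<forall>t\<in>{y..x}. En k \<psi> \<psi>' t \<le> M"
  shows "En k \<psi> \<psi>' x \<le> En k \<psi> \<psi>' y + M / k * integral {y..x} (\<lambda>t. norm (V t))"
proof -
  let ?E = "\<lambda>t. of_real (En k \<psi> \<psi>' t)::complex"
  let ?E' = "\<lambda>t. \<psi>' t * cnj (V t) * cnj (\<psi> t) + V t * \<psi> t * cnj (\<psi>' t)"
  have fi: "(?E' has_integral (?E x - ?E y)) {y..x}"
    by (rule fundamental_theorem_of_calculus[OF yx]) (auto intro: has_vector_derivative_at_within En_deriv[OF s])
  have "norm (integral {y..x} ?E') \<le> integral {y..x} (\<lambda>t. M / k * norm (V t))"
  proof (rule integral_norm_bound_integral)
    show "?E' integrable_on {y..x}" using fi by auto
    show "(\<lambda>t. M / k * norm (V t)) integrable_on {y..x}"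
      by (intro integrable_on_mult_right good_int[OF g])
    fix t assume t: "t \<in> {y..x}"
    have "norm (?E' t) \<le> norm (V t) * En k \<psi> \<psi>' t / k" by (rule En_deriv_bound[OF k])
    also have "\<dots> \<le> norm (V t) * M / k"
      using M t k by (intro divide_right_mono mult_left_mono) auto
    finally show "norm (?E' t) \<le> M / k * norm (V t)" by (simp add: ac_simps)
  qed
  also have "\<dots> = M / k * integral {y..x} (\<lambda>t. norm (V t))" by simp
  finally have "norm (?E x - ?E y) \<le> M / k * integral {y..x} (\<lambda>t. norm (V t))"
    using fi by (simp add: integral_unique)
  moreover have "norm (?E x - ?E y) = \<bar>En k \<psi> \<psi>' x - En k \<psi> \<psi>' y\<bar>"
    by (metis norm_of_real of_real_diff)
  ultimately show ?thesis by linarith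
qed



lemma halve:
  fixes f :: "real \<Rightarrow> real"
  assumes A: "A \<noteq> {}" and bd: "bdd_above (f ` A)" and nn: "\<forall>t\<in>A. 0 \<le> f t"
    and h: "\<forall>x\<in>A. f x \<le> Sup (f ` A) / 2"
  shows "\<forall>t\<in>A. f t = 0"
proof -
  have "Sup (f ` A) \<le> Sup (f ` A) / 2" using A h by (intro cSUP_least) auto
  then have "Sup (f ` A) \<le> 0" by linarith
  moreover have "f t \<le> Sup (f ` A)" if "t \<in> A" for t by (rule cSUP_upper[OF that bd])
  ultimately show ?thesis using nn by force
qed

lemma cont_bdd:
  fixes f :: "real \<Rightarrow> real"
  assumes "continuous_on {a..b} f"
  shows "\<exists>M. \<forall>t\<in>{a..b}. f t \<le> M"
proof -
  have "compact (f ` {a..b})" by (rule compact_continuous_image[OF assms compact_Icc])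
  then have "bounded (f ` {a..b})" by (rule compact_imp_bounded)
  then show ?thesis by (meson bounded_imp_bdd_above bdd_above_def imageI)
qed

lemma zero_bot:
  assumes g: "good V" and k: "k > 0" and s: "isol V k \<psi> \<psi>'" and l: "(\<psi> \<longlongrightarrow> 0) at_bot"
  shows "\<exists>x0. \<forall>t\<le>x0. En k \<psi> \<psi>' t = 0"
proof -
  let ?E = "En k \<psi> \<psi>'"
  have d1: "\<forall>t. (\<psi> has_vector_derivative \<psi>' t) (at t)" and
       d2: "\<forall>t. (\<psi>' has_vector_derivative ((V t - (of_real k)^2) * \<psi> t)) (at t)"
    using s by (auto simp: isol_def)
  have pb: "eventually (\<lambda>t. norm (\<psi> t) \<le> 1) at_bot"
    using tendstoD[OF l, of 1] by (auto elim: eventually_mono)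
  have l': "(\<psi>' \<longlongrightarrow> 0) at_bot"
    by (rule D_bot[where k=k, OF g d1 d2 _ pb l]) (simp add: algebra_simps)
  have El: "(?E \<longlongrightarrow> 0) at_bot"
  proof -
    have "((\<lambda>t. k^2 * (norm (\<psi> t))^2 + (norm (\<psi>' t))^2) \<longlongrightarrow> k^2 * (norm (0::complex))^2 + (norm (0::complex))^2) at_bot"
      by (intro tendsto_intros l l')
    then show ?thesis unfolding En_def by simp
  qed
  have "(0::real) < k / 2" using k by simp
  from good_tail[OF g this] obtain B where B: "B > 0"
    "\<forall>a b. (b \<le> -B \<or> B \<le> a) \<longrightarrow> integral {a..b} (\<lambda>x. norm (V x)) \<le> k / 2" by auto
  define x0 where "x0 = -B"
  have "eventually (\<lambda>t. ?E t \<le> 1) at_bot"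
    using tendstoD[OF El, of 1] by (auto elim!: eventually_mono simp: dist_real_def En_nonneg)
  then obtain N where N: "\<forall>t\<le>N. ?E t \<le> 1" by (auto simp: eventually_at_bot_linorder)
  obtain M1 where M1: "\<forall>t\<in>{min N x0..x0}. ?E t \<le> M1"
    using cont_bdd[OF En_cont[OF s]] by blast
  have bd: "bdd_above (?E ` {..x0})"
  proof (rule bdd_aboveI[of _ "max 1 M1"])
    fix y assume "y \<in> ?E ` {..x0}"
    then obtain t where t: "t \<le> x0" "y = ?E t" by auto
    show "y \<le> max 1 M1"
    proof (cases "t \<le> N")
      case True then show ?thesis using N t by force
    next
      case False
      then have "t \<in> {min N x0..x0}" using t by auto
      then show ?thesis using M1 t by fastforce
    qed
  qed
  let ?S = "Sup (?E ` {..x0})"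
  have Sup_ub: "?E t \<le> ?S" if "t \<le> x0" for t using bd that by (intro cSUP_upper) auto
  have S0: "0 \<le> ?S" using Sup_ub[of x0] En_nonneg[of k \<psi> \<psi>' x0] by linarith
  have half: "\<forall>x\<in>{..x0}. ?E x \<le> ?S / 2"
  proof
    fix x assume x: "x \<in> {..x0}"
    show "?E x \<le> ?S / 2"
    proof (rule field_le_epsilon)
      fix \<epsilon> :: real assume \<epsilon>: "\<epsilon> > 0"
      have "eventually (\<lambda>t. ?E t < \<epsilon>) at_bot"
        using tendstoD[OF El \<epsilon>] by (auto elim!: eventually_mono simp: dist_real_def En_nonneg)
      then obtain N2 where N2: "\<forall>t\<le>N2. ?E t < \<epsilon>" by (auto simp: eventually_at_bot_linorder)
      define y where "y = min N2 x"
      have "?E x \<le> ?E y + ?S / k * integral {y..x} (\<lambda>t. norm (V t))"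
        by (rule energy_step[OF g k s]) (use x Sup_ub y_def in auto)
      also have "\<dots> \<le> ?E y + ?S / k * (k / 2)"
        using B x S0 k unfolding x0_def by (intro add_left_mono mult_left_mono) auto
      also have "\<dots> < \<epsilon> + ?S / 2" using N2 y_def k by auto
      finally show "?E x \<le> ?S / 2 + \<epsilon>" by simp
    qed
  qed
  have "\<forall>t\<in>{..x0}. ?E t = 0"
    by (rule halve[OF _ bd _ half]) (auto simp: En_nonneg)
  then show ?thesis by auto
qed

lemma forward:
  assumes g: "good V" and k: "k > 0" and s: "isol V k \<psi> \<psi>'" and c: "En k \<psi> \<psi>' c = 0"
    and h: "h > 0" and ih: "integral {c..c+h} (\<lambda>x. norm (V x)) \<le> k / 2"
  shows "\<forall>t\<in>{c..c+h}. En k \<psi> \<psi>' t = 0"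
proof -
  let ?E = "En k \<psi> \<psi>'"
  let ?A = "{c..c+h}"
  obtain M1 where M1: "\<forall>t\<in>?A. ?E t \<le> M1"
    using cont_bdd[OF En_cont[OF s]] by blast
  have bd: "bdd_above (?E ` ?A)" using M1 by (auto intro: bdd_aboveI)
  let ?S = "Sup (?E ` ?A)"
  have Sup_ub: "?E t \<le> ?S" if "t \<in> ?A" for t using bd that by (intro cSUP_upper) auto
  have S0: "0 \<le> ?S" using Sup_ub[of c] h En_nonneg[of k \<psi> \<psi>' c] by auto
  have half: "\<forall>x\<in>?A. ?E x \<le> ?S / 2"
  proof
    fix x assume x: "x \<in> ?A"
    have "?E x \<le> ?E c + ?S / k * integral {c..x} (\<lambda>t. norm (V t))"
      by (rule energy_step[OF g k s]) (use x Sup_ub in auto)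
    also have "integral {c..x} (\<lambda>t. norm (V t)) \<le> integral ?A (\<lambda>t. norm (V t))"
      by (rule integral_subset_le) (use x good_int[OF g] in auto)
    then have "?S / k * integral {c..x} (\<lambda>t. norm (V t)) \<le> ?S / k * (k / 2)"
      using ih S0 k by (intro mult_left_mono) auto
    finally show "?E x \<le> ?S / 2" using c k by simp
  qed
  show ?thesis
    by (rule halve[OF _ bd _ half]) (use h in \<open>auto simp: En_nonneg\<close>)
qed

lemma U_bot:
  assumes g: "good V" and k: "k > 0" and s: "isol V k \<psi> \<psi>'" and l: "(\<psi> \<longlongrightarrow> 0) at_bot"
  shows "\<psi> x = 0"
proof -
  let ?E = "En k \<psi> \<psi>'"
  obtain x0 where x0: "\<forall>t\<le>x0. ?E t = 0" using zero_bot[OF g k s l] by blast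
  have all: "\<forall>t. ?E t = 0"
  proof (rule ccontr)
    assume "\<not> (\<forall>t. ?E t = 0)"
    then obtain x1 where x1: "?E x1 \<noteq> 0" by blast
    define Z where "Z = {t. \<forall>s\<le>t. ?E s = 0}"
    have x0Z: "x0 \<in> Z" using x0 by (auto simp: Z_def)
    have Zb: "t < x1" if tZ: "t \<in> Z" for t
    proof (rule ccontr)
      assume "\<not> t < x1"
      then have "x1 \<le> t" by simp
      with tZ have "?E x1 = 0" by (auto simp: Z_def)
      with x1 show False by simp
    qed
    have bdZ: "bdd_above Z" using Zb by (meson bdd_aboveI less_imp_le)
    define T where "T = Sup Z"
    have below: "?E s = 0" if sT: "s < T" for s
    proof -
      have "Z \<noteq> {}" using x0Z by blast
      from less_cSupD[OF this sT[unfolded T_def]]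
      obtain t where "t \<in> Z" "s < t" by blast
      then show ?thesis by (auto simp: Z_def)
    qed
    have ET: "?E T = 0"
    proof -
      have "isCont ?E T" using En_cont[OF s, of UNIV] by (simp add: continuous_on_eq_continuous_at)
      then have "(?E \<longlongrightarrow> ?E T) (at_left T)" by (simp add: isCont_def filterlim_at_split)
      moreover have "(?E \<longlongrightarrow> 0) (at_left T)"
        by (rule tendsto_eventually) (auto simp: eventually_at_left_field below intro: exI[of _ "T - 1"])
      ultimately show ?thesis using tendsto_unique[OF trivial_limit_at_left_real] by blast
    qed
    obtain d where d: "d > 0" "\<forall>t. T \<le> t \<and> t < T + d \<longrightarrow>
        norm (integral {T..T} (\<lambda>x. norm (V x)) - integral {T..t} (\<lambda>x. norm (V x))) < k / 2"
      using indefinite_integral_continuous_right[OF good_int[OF g, of T "T+1"], of T "k/2"] k by auto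
    define h where "h = d / 2"
    have h: "h > 0" using d by (simp add: h_def)
    have "integral {T..T+h} (\<lambda>x. norm (V x)) \<le> k / 2"
    proof -
      have "\<bar>integral {T..T+h} (\<lambda>x. norm (V x))\<bar> < k / 2"
        using d(2)[rule_format, of "T+h"] d h_def by auto
      then show ?thesis by linarith
    qed
    from forward[OF g k s ET h this] have fw: "\<forall>t\<in>{T..T+h}. ?E t = 0" .
    have "T + h \<in> Z"
    proof -
      have "?E s = 0" if "s \<le> T + h" for s
      proof (cases "s < T")
        case True then show ?thesis by (rule below)
      next
        case False then show ?thesis using fw that by auto
      qed
      then show ?thesis by (auto simp: Z_def)
    qed
    then have "T + h \<le> T" unfolding T_def using bdZ by (rule cSup_upper)
    then show False using h by simp
  qed
  show ?thesis using En_zero[OF k all[rule_format, of x]] by simp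
qed



definition ee :: "real \<Rightarrow> real \<Rightarrow> complex" where
  "ee s x = exp (\<i> * complex_of_real s * complex_of_real x)"

lemma ee_norm [simp]: "norm (ee s x) = 1"
proof -
  have "ee s x = exp (\<i> * of_real (s * x))" by (simp add: ee_def mult.assoc)
  then show ?thesis by simp
qed

lemma ee_deriv: "((ee s) has_vector_derivative (\<i> * of_real s * ee s x)) (at x)"
proof -
  have "((\<lambda>z. exp (\<i> * complex_of_real s * z)) has_field_derivative (\<i> * of_real s * exp (\<i> * complex_of_real s * of_real x))) (at (of_real x))"
    by (auto intro!: derivative_eq_intros)
  from has_vector_derivative_real_field[OF this] show ?thesis
    unfolding ee_def[abs_def] by simp
qed

lemma ee_shift: "k > 0 \<Longrightarrow> ee k (x + pi / (2*k)) = \<i> * ee k x"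
proof -
  assume k: "k > 0"
  have "ee k (x + pi / (2*k)) = ee k x * exp (\<i> * of_real (pi/2))"
    unfolding ee_def using k by (simp add: exp_add[symmetric] algebra_simps)
  also have "exp (\<i> * of_real (pi/2)) = \<i>"
  proof -
    have "cis (pi/2) = \<i>" by (simp add: complex_eq_iff)
    then show ?thesis using cis_conv_exp[of "pi/2"] by metis
  qed
  finally show ?thesis by simp
qed

lemma ee_shift': "k > 0 \<Longrightarrow> ee (-k) (x + pi / (2*k)) = - \<i> * ee (-k) x"
proof -
  assume k: "k > 0"
  have "ee (-k) (x + pi / (2*k)) = ee (-k) x * exp (- (\<i> * of_real (pi/2)))"
    unfolding ee_def using k by (simp add: exp_add[symmetric] algebra_simps)
  also have "exp (- (\<i> * of_real (pi/2))) = - \<i>"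
  proof -
    have "cis (-(pi/2)) = - \<i>" by (simp add: complex_eq_iff)
    then show ?thesis using cis_conv_exp[of "-(pi/2)"] by simp
  qed
  finally show ?thesis by simp
qed

lemma isol_reflect:
  assumes s: "isol V k \<psi> \<psi>'"
  shows "isol (\<lambda>x. V (-x)) k (\<lambda>x. \<psi> (-x)) (\<lambda>x. - \<psi>' (-x))"
proof -
  have m: "(uminus has_vector_derivative (-1)) (at x)" for x :: real
    using has_vector_derivative_minus[OF has_vector_derivative_id[of "at x"]] by simp
  have "((\<psi> \<circ> uminus) has_vector_derivative ((-1) *\<^sub>R \<psi>' (-x))) (at x)" for x
    by (rule vector_diff_chain_at[OF m]) (use s in \<open>auto simp: isol_def\<close>)
  moreover have "((\<psi>' \<circ> uminus) has_vector_derivative ((-1) *\<^sub>R ((V (-x) - (of_real k)^2) * \<psi> (-x)))) (at x)" for x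
    by (rule vector_diff_chain_at[OF m]) (use s in \<open>auto simp: isol_def\<close>)
  then have "((\<lambda>x. - \<psi>' (-x)) has_vector_derivative ((V (-x) - (of_real k)^2) * \<psi> (-x))) (at x)" for x
    using has_vector_derivative_minus[of "\<psi>' \<circ> uminus" _ "at x"] by (force simp: o_def)
  ultimately show ?thesis unfolding isol_def by (simp add: o_def)
qed

lemma U_top:
  assumes g: "good V" and k: "k > 0" and s: "isol V k \<psi> \<psi>'" and l: "(\<psi> \<longlongrightarrow> 0) at_top"
  shows "\<psi> x = 0"
proof -
  have l': "((\<lambda>x. \<psi> (-x)) \<longlongrightarrow> 0) at_bot" using l by (simp add: filterlim_at_top_mirror)
  have "\<psi> (- (-x)) = 0"
    by (rule U_bot[OF good_reflect[OF g] k isol_reflect[OF s] l'])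
  then show ?thesis by simp
qed

lemma isol_lin:
  assumes "isol V k f f'" "isol V k g g'"
  shows "isol V k (\<lambda>x. a * f x + b * g x) (\<lambda>x. a * f' x + b * g' x)"
proof -
  have "((\<lambda>x. a * f x + b * g x) has_vector_derivative a * f' x + b * g' x) (at x)" for x
    using assms by (auto simp: isol_def intro!: derivative_intros)
  moreover have "((\<lambda>x. a * f' x + b * g' x) has_vector_derivative
       (V x - (of_real k)^2) * (a * f x + b * g x)) (at x)" for x
  proof -
    have "((\<lambda>x. a * f' x + b * g' x) has_vector_derivative
       a * ((V x - (of_real k)^2) * f x) + b * ((V x - (of_real k)^2) * g x)) (at x)"
      using assms by (auto simp: isol_def intro!: derivative_intros)
    then show ?thesis by (simp add: algebra_simps)
  qed
  ultimately show ?thesis by (simp add: isol_def)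
qed

lemma isol_unique: "isol V k f f' \<Longrightarrow> isol V k f g' \<Longrightarrow> f' x = g' x"
  unfolding isol_def using vector_derivative_unique_at by blast

lemma schrod_isol:
  assumes "schrod_sol V k \<phi>" shows "\<exists>\<phi>'. isol V k \<phi> \<phi>'"
proof -
  obtain \<phi>' \<phi>'' where h: "\<forall>x. (\<phi> has_vector_derivative \<phi>' x) (at x) \<and>
       (\<phi>' has_vector_derivative \<phi>'' x) (at x) \<and> - \<phi>'' x + V x * \<phi> x = (complex_of_real k)\<^sup>2 * \<phi> x"
    using assms unfolding schrod_sol_def by blast
  have "\<phi>'' x = (V x - (of_real k)^2) * \<phi> x" for x
    using h[rule_format, of x] by (simp add: algebra_simps)
  then show ?thesis using h unfolding isol_def by (intro exI[of _ \<phi>']) auto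
qed

lemma const_zero: "((\<lambda>x::real. c::complex) \<longlongrightarrow> 0) at_top \<Longrightarrow> c = 0"
  using tendsto_unique[OF trivial_limit_at_top_linorder tendsto_const] by blast

lemma indep:
  assumes k: "k > 0" and l: "((\<lambda>x. \<alpha> * ee k x + \<beta> * ee (-k) x) \<longlongrightarrow> 0) at_top"
  shows "\<alpha> = 0 \<and> \<beta> = 0"
proof -
  define f where "f = (\<lambda>x. \<alpha> * ee k x + \<beta> * ee (-k) x)"
  define c where "c = pi / (2*k)"
  have sh: "LIM x at_top. x + c :> at_top"
    using filterlim_tendsto_add_at_top[OF tendsto_const[of c] filterlim_ident] by (simp add: add.commute)
  have l2: "((\<lambda>x. f (x + c)) \<longlongrightarrow> 0) at_top"
    using filterlim_compose[OF l[folded f_def] sh] by simp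
  have fs: "f (x + c) = \<i> * \<alpha> * ee k x - \<i> * \<beta> * ee (-k) x" for x
    unfolding f_def c_def using ee_shift[OF k] ee_shift'[OF k] by (simp add: algebra_simps)
  have A: "((\<lambda>x. f x - \<i> * f (x + c)) \<longlongrightarrow> 0 - \<i> * 0) at_top"
    by (intro tendsto_intros l2) (use l f_def in simp)
  have B: "((\<lambda>x. f x + \<i> * f (x + c)) \<longlongrightarrow> 0 + \<i> * 0) at_top"
    by (intro tendsto_intros l2) (use l f_def in simp)
  have eqA: "(\<lambda>x. norm (f x - \<i> * f (x + c))) = (\<lambda>x::real. 2 * norm \<alpha>)"
  proof
    fix x
    have "f x - \<i> * f (x + c) = 2 * \<alpha> * ee k x" unfolding fs by (simp add: f_def algebra_simps)
    then show "norm (f x - \<i> * f (x + c)) = 2 * norm \<alpha>" by (simp add: norm_mult)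
  qed
  have "((\<lambda>x::real. 2 * norm \<alpha>) \<longlongrightarrow> 0) at_top"
    using tendsto_norm[OF A] unfolding eqA by simp
  then have "2 * norm \<alpha> = 0" using tendsto_unique[OF trivial_limit_at_top_linorder tendsto_const] by blast
  then have a: "\<alpha> = 0" by simp
  have eqB: "(\<lambda>x. norm (f x + \<i> * f (x + c))) = (\<lambda>x::real. 2 * norm \<beta>)"
  proof
    fix x
    have "f x + \<i> * f (x + c) = 2 * \<beta> * ee (-k) x" unfolding fs by (simp add: f_def algebra_simps)
    then show "norm (f x + \<i> * f (x + c)) = 2 * norm \<beta>" by (simp add: norm_mult)
  qed
  have "((\<lambda>x::real. 2 * norm \<beta>) \<longlongrightarrow> 0) at_top"
    using tendsto_norm[OF B] unfolding eqB by simp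
  then have "2 * norm \<beta> = 0" using tendsto_unique[OF trivial_limit_at_top_linorder tendsto_const] by blast
  then have "\<beta> = 0" by simp
  with a show ?thesis by simp
qed



lemma jost_deriv_gen:
  assumes s: "isol V k \<phi> \<phi>'" and sk: "s^2 = k^2"
  shows "\<forall>t. ((\<lambda>x. \<phi> x - ee s x) has_vector_derivative (\<phi>' t - \<i> * of_real s * ee s t)) (at t)"
    and "\<forall>t. ((\<lambda>x. \<phi>' x - \<i> * of_real s * ee s x) has_vector_derivative
            ((V t - (of_real k)^2) * \<phi> t + (of_real s)^2 * ee s t)) (at t)"
    and "\<forall>t. (V t - (of_real k)^2) * \<phi> t + (of_real s)^2 * ee s t = V t * \<phi> t - (of_real k)^2 * (\<phi> t - ee s t)"
proof -
  show "\<forall>t. ((\<lambda>x. \<phi> x - ee s x) has_vector_derivative (\<phi>' t - \<i> * of_real s * ee s t)) (at t)"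
    using s ee_deriv by (auto simp: isol_def intro!: derivative_intros)
  show "\<forall>t. ((\<lambda>x. \<phi>' x - \<i> * of_real s * ee s x) has_vector_derivative
            ((V t - (of_real k)^2) * \<phi> t + (of_real s)^2 * ee s t)) (at t)"
  proof
    fix t
    have "((\<lambda>x. \<phi>' x - \<i> * of_real s * ee s x) has_vector_derivative
            ((V t - (of_real k)^2) * \<phi> t - \<i> * of_real s * (\<i> * of_real s * ee s t))) (at t)"
      using s ee_deriv by (auto simp: isol_def intro!: derivative_intros)
    then show "((\<lambda>x. \<phi>' x - \<i> * of_real s * ee s x) has_vector_derivative
            ((V t - (of_real k)^2) * \<phi> t + (of_real s)^2 * ee s t)) (at t)"
      by (simp add: algebra_simps power2_eq_square)
  qed
  have "(of_real s :: complex)^2 = (of_real k)^2" using sk by (metis of_real_power)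
  then show "\<forall>t. (V t - (of_real k)^2) * \<phi> t + (of_real s)^2 * ee s t = V t * \<phi> t - (of_real k)^2 * (\<phi> t - ee s t)"
    by (simp add: algebra_simps)
qed

lemma bound_ev:
  assumes "((\<lambda>x. \<phi> x - ee s x) \<longlongrightarrow> 0) F"
  shows "eventually (\<lambda>t. norm (\<phi> t) \<le> 2) F"
proof -
  have "eventually (\<lambda>t. dist (\<phi> t - ee s t) 0 < 1) F" using tendstoD[OF assms, of 1] by simp
  then show ?thesis
  proof (rule eventually_mono)
    fix t assume "dist (\<phi> t - ee s t) 0 < 1"
    then have "norm (\<phi> t - ee s t) < 1" by simp
    moreover have "norm (\<phi> t) \<le> norm (\<phi> t - ee s t) + norm (ee s t)"
      using norm_triangle_sub[of "\<phi> t" "ee s t"] by linarith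
    ultimately show "norm (\<phi> t) \<le> 2" by simp
  qed
qed

lemma jost_deriv_bot:
  assumes g: "good V" and s: "isol V k \<phi> \<phi>'" and sk: "s^2 = k^2"
    and a: "((\<lambda>x. \<phi> x - ee s x) \<longlongrightarrow> 0) at_bot"
  shows "((\<lambda>x. \<phi>' x - \<i> * of_real s * ee s x) \<longlongrightarrow> 0) at_bot"
  using D_bot[OF g jost_deriv_gen[OF s sk] bound_ev[OF a] a] .

lemma jost_deriv_top:
  assumes g: "good V" and s: "isol V k \<phi> \<phi>'" and sk: "s^2 = k^2"
    and a: "((\<lambda>x. \<phi> x - ee s x) \<longlongrightarrow> 0) at_top"
  shows "((\<lambda>x. \<phi>' x - \<i> * of_real s * ee s x) \<longlongrightarrow> 0) at_top"
  using D_top[OF g jost_deriv_gen[OF s sk] bound_ev[OF a] a] .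

lemma ident_bot:
  assumes g: "good V" and k: "k > 0" and f: "isol V k f f'" and gs: "isol V k h h'"
    and a1: "((\<lambda>x. f x - c * ee s x) \<longlongrightarrow> 0) at_bot"
    and a2: "((\<lambda>x. h x - ee s x) \<longlongrightarrow> 0) at_bot"
  shows "f x = c * h x"
proof -
  have s: "isol V k (\<lambda>x. 1 * f x + (-c) * h x) (\<lambda>x. 1 * f' x + (-c) * h' x)"
    by (rule isol_lin[OF f gs])
  have "((\<lambda>x. (f x - c * ee s x) - c * (h x - ee s x)) \<longlongrightarrow> 0 - c * 0) at_bot"
    by (intro tendsto_intros a1 a2)
  then have "((\<lambda>x. 1 * f x + (-c) * h x) \<longlongrightarrow> 0) at_bot" by (simp add: algebra_simps)
  from U_bot[OF g k s this] show ?thesis by simp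
qed

lemma ident_top:
  assumes g: "good V" and k: "k > 0" and f: "isol V k f f'" and gs: "isol V k h h'"
    and a1: "((\<lambda>x. f x - c * ee s x) \<longlongrightarrow> 0) at_top"
    and a2: "((\<lambda>x. h x - ee s x) \<longlongrightarrow> 0) at_top"
  shows "f x = c * h x"
proof -
  have s: "isol V k (\<lambda>x. 1 * f x + (-c) * h x) (\<lambda>x. 1 * f' x + (-c) * h' x)"
    by (rule isol_lin[OF f gs])
  have "((\<lambda>x. (f x - c * ee s x) - c * (h x - ee s x)) \<longlongrightarrow> 0 - c * 0) at_top"
    by (intro tendsto_intros a1 a2)
  then have "((\<lambda>x. 1 * f x + (-c) * h x) \<longlongrightarrow> 0) at_top" by (simp add: algebra_simps)
  from U_top[OF g k s this] show ?thesis by simp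
qed

lemma chi_asym:
  assumes a1: "((\<lambda>x. \<phi> x - ee s x) \<longlongrightarrow> 0) F"
    and a2: "((\<lambda>x. \<phi>' x - \<i> * of_real s * ee s x) \<longlongrightarrow> 0) F"
    and wl: "(w \<longlongrightarrow> c) F"
  shows "((\<lambda>x. cnj (\<phi>' x + \<i> * of_real (w x) * \<phi> x) - (- \<i> * of_real (s + c)) * ee (-s) x) \<longlongrightarrow> 0) F"
proof -
  have t3: "((\<lambda>x. \<i> * of_real (w x - c) * ee s x) \<longlongrightarrow> 0) F"
  proof -
    have "((\<lambda>x. \<bar>w x - c\<bar>) \<longlongrightarrow> \<bar>c - c\<bar>) F" by (intro tendsto_intros wl)
    then have "((\<lambda>x. norm (\<i> * of_real (w x - c) * ee s x)) \<longlongrightarrow> 0) F"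
      by (simp add: norm_mult del: of_real_diff)
    then show ?thesis by (simp only: tendsto_norm_zero_iff)
  qed
  have "((\<lambda>x. (\<phi>' x - \<i> * of_real s * ee s x) + \<i> * of_real (w x) * (\<phi> x - ee s x) + \<i> * of_real (w x - c) * ee s x)
      \<longlongrightarrow> 0 + \<i> * of_real c * 0 + 0) F"
    by (intro tendsto_intros a1 a2 wl t3)
  then have "((\<lambda>x. cnj ((\<phi>' x - \<i> * of_real s * ee s x) + \<i> * of_real (w x) * (\<phi> x - ee s x) + \<i> * of_real (w x - c) * ee s x))
      \<longlongrightarrow> cnj 0) F"
    by (intro tendsto_cnj) simp
  then have L: "((\<lambda>x. cnj ((\<phi>' x - \<i> * of_real s * ee s x) + \<i> * of_real (w x) * (\<phi> x - ee s x) + \<i> * of_real (w x - c) * ee s x))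
      \<longlongrightarrow> 0) F" by simp
  have eqx: "cnj ((\<phi>' x - \<i> * of_real s * ee s x) + \<i> * of_real (w x) * (\<phi> x - ee s x) + \<i> * of_real (w x - c) * ee s x)
     = cnj (\<phi>' x + \<i> * of_real (w x) * \<phi> x) - (- \<i> * of_real (s + c)) * ee (-s) x" for x
  proof -
    have ce: "cnj (ee s x) = ee (-s) x" unfolding ee_def by (simp add: exp_cnj)
    have "(\<phi>' x - \<i> * of_real s * ee s x) + \<i> * of_real (w x) * (\<phi> x - ee s x) + \<i> * of_real (w x - c) * ee s x
       = (\<phi>' x + \<i> * of_real (w x) * \<phi> x) - \<i> * of_real (s + c) * ee s x"
      by (simp add: algebra_simps)
    then show ?thesis using ce by (simp add: algebra_simps)
  qed
  show ?thesis using L unfolding ext[OF eqx] .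
qed

lemma Btrans:
  assumes wder: "\<forall>x. (w has_real_derivative w' x) (at x)" and s: "isol (pot w w' k0) k \<phi> \<phi>'"
  shows "isol (pot w w' k0) k (\<lambda>x. cnj (\<phi>' x + \<i> * of_real (w x) * \<phi> x))
     (\<lambda>x. cnj (\<i> * of_real (w x) * (\<phi>' x + \<i> * of_real (w x) * \<phi> x) + ((of_real k0)^2 - (of_real k)^2) * \<phi> x))"
proof -
  have d1: "(\<phi> has_vector_derivative \<phi>' x) (at x)" and
       d2: "(\<phi>' has_vector_derivative ((pot w w' k0 x - (of_real k)^2) * \<phi> x)) (at x)"
    for x using s by (auto simp: isol_def)
  have dw: "((\<lambda>x. complex_of_real (w x)) has_vector_derivative of_real (w' x)) (at x)" for x
    by (rule has_vector_derivative_of_real) (use wder in auto)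
  define chh where "chh = (\<lambda>x. \<phi>' x + \<i> * of_real (w x) * \<phi> x)"
  define chd where "chd = (\<lambda>x. \<i> * of_real (w x) * chh x + ((of_real k0)^2 - (of_real k)^2) * \<phi> x)"
  have c1: "(chh has_vector_derivative chd x) (at x)" for x
  proof -
    have "(chh has_vector_derivative ((pot w w' k0 x - (of_real k)^2) * \<phi> x +
        \<i> * (of_real (w x) * \<phi>' x + of_real (w' x) * \<phi> x))) (at x)"
      unfolding chh_def using d1 d2 dw wder
      by (auto intro!: derivative_eq_intros simp: algebra_simps)
    moreover have "(pot w w' k0 x - (of_real k)^2) * \<phi> x + \<i> * (of_real (w x) * \<phi>' x + of_real (w' x) * \<phi> x)
       = chd x"
      unfolding chd_def chh_def pot_def by (simp add: algebra_simps power2_eq_square)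
    ultimately show ?thesis by simp
  qed
  have c2: "(chd has_vector_derivative
      ((\<i> * of_real (w' x) - (of_real (w x))^2 + (of_real k0)^2 - (of_real k)^2) * chh x)) (at x)" for x
  proof -
    have "((\<lambda>x. \<i> * of_real (w x) * chh x + ((of_real k0)^2 - (of_real k)^2) * \<phi> x) has_vector_derivative (\<i> * (of_real (w x) * chd x + of_real (w' x) * chh x) +
        ((of_real k0)^2 - (of_real k)^2) * \<phi>' x)) (at x)"
      using d1 dw c1 wder
      by (auto intro!: derivative_eq_intros simp: algebra_simps)
    then have "(chd has_vector_derivative (\<i> * (of_real (w x) * chd x + of_real (w' x) * chh x) +
        ((of_real k0)^2 - (of_real k)^2) * \<phi>' x)) (at x)"
      unfolding chd_def .
    moreover have "\<i> * (of_real (w x) * chd x + of_real (w' x) * chh x) +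
        ((of_real k0)^2 - (of_real k)^2) * \<phi>' x =
        (\<i> * of_real (w' x) - (of_real (w x))^2 + (of_real k0)^2 - (of_real k)^2) * chh x"
      unfolding chd_def chh_def by (simp add: algebra_simps power2_eq_square)
    ultimately show ?thesis by simp
  qed
  have e1: "((\<lambda>x. cnj (chh x)) has_vector_derivative cnj (chd x)) (at x)" for x
    by (rule has_vector_derivative_cnj[OF c1])
  have e2: "((\<lambda>x. cnj (chd x)) has_vector_derivative (pot w w' k0 x - (of_real k)^2) * cnj (chh x)) (at x)" for x
  proof -
    have "((\<lambda>x. cnj (chd x)) has_vector_derivative
        cnj ((\<i> * of_real (w' x) - (of_real (w x))^2 + (of_real k0)^2 - (of_real k)^2) * chh x)) (at x)"
      by (rule has_vector_derivative_cnj[OF c2])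
    moreover have "cnj ((\<i> * of_real (w' x) - (of_real (w x))^2 + (of_real k0)^2 - (of_real k)^2) * chh x)
       = (pot w w' k0 x - (of_real k)^2) * cnj (chh x)"
      by (simp add: pot_def)
    ultimately show ?thesis by metis
  qed
  show ?thesis using e1 e2 unfolding isol_def chh_def chd_def by simp
qed



lemma asymp_ee: "asymp_exp \<phi> s F \<longleftrightarrow> ((\<lambda>x. \<phi> x - ee s x) \<longlongrightarrow> 0) F"
  by (simp add: asymp_exp_def ee_def)

lemma key:
  fixes w w' :: "real \<Rightarrow> real" and k0 k :: real
    and M11 M12 M21 M22 :: "real \<Rightarrow> complex"
  assumes k: "k > 0"
    and wder: "\<forall>x. (w has_real_derivative w' x) (at x)"
    and lim_top: "(w \<longlongrightarrow> - k0) at_top"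
    and lim_bot: "(w \<longlongrightarrow> k0) at_bot"
    and g: "good (pot w w' k0)"
    and M: "is_transfer_matrix (pot w w' k0) M11 M12 M21 M22"
  shows "M11 k * of_real (k - k0) = of_real (k + k0) * cnj (M22 k)"
proof -
  let ?V = "pot w w' k0"
  obtain \<phi>1L \<phi>2L \<phi>1R \<phi>2R where
    s: "schrod_sol ?V k \<phi>1L" "schrod_sol ?V k \<phi>2L" "schrod_sol ?V k \<phi>1R" "schrod_sol ?V k \<phi>2R"
    and a1L: "((\<lambda>x. \<phi>1L x - ee k x) \<longlongrightarrow> 0) at_bot"
    and a2L: "((\<lambda>x. \<phi>2L x - ee (-k) x) \<longlongrightarrow> 0) at_bot"
    and a1R: "((\<lambda>x. \<phi>1R x - ee k x) \<longlongrightarrow> 0) at_top"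
    and a2R: "((\<lambda>x. \<phi>2R x - ee (-k) x) \<longlongrightarrow> 0) at_top"
    and r1: "\<forall>x. \<phi>1L x = M11 k * \<phi>1R x + M21 k * \<phi>2R x"
    and r2: "\<forall>x. \<phi>2L x = M12 k * \<phi>1R x + M22 k * \<phi>2R x"
    using M k unfolding is_transfer_matrix_def asymp_ee by blast
  obtain p1L where i1L: "isol ?V k \<phi>1L p1L" using schrod_isol[OF s(1)] by blast
  obtain p2L where i2L: "isol ?V k \<phi>2L p2L" using schrod_isol[OF s(2)] by blast
  obtain p1R where i1R: "isol ?V k \<phi>1R p1R" using schrod_isol[OF s(3)] by blast
  obtain p2R where i2R: "isol ?V k \<phi>2R p2R" using schrod_isol[OF s(4)] by blast
  have kk: "k^2 = k^2" "(-k)^2 = k^2" by simp_all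
  have d1L: "((\<lambda>x. p1L x - \<i> * of_real k * ee k x) \<longlongrightarrow> 0) at_bot"
    by (rule jost_deriv_bot[OF g i1L kk(1) a1L])
  have d1R: "((\<lambda>x. p1R x - \<i> * of_real k * ee k x) \<longlongrightarrow> 0) at_top"
    by (rule jost_deriv_top[OF g i1R kk(1) a1R])
  have d2R: "((\<lambda>x. p2R x - \<i> * of_real (-k) * ee (-k) x) \<longlongrightarrow> 0) at_top"
    by (rule jost_deriv_top[OF g i2R kk(2) a2R])
  define ch where "ch = (\<lambda>\<phi> \<phi>' x. cnj (\<phi>' x + \<i> * of_real (w x) * \<phi> x))"
  have c1L: "((\<lambda>x. ch \<phi>1L p1L x - (- \<i> * of_real (k + k0)) * ee (-k) x) \<longlongrightarrow> 0) at_bot"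
    unfolding ch_def by (rule chi_asym[OF a1L d1L lim_bot])
  have c1R: "((\<lambda>x. ch \<phi>1R p1R x - (- \<i> * of_real (k + - k0)) * ee (-k) x) \<longlongrightarrow> 0) at_top"
    unfolding ch_def by (rule chi_asym[OF a1R d1R lim_top])
  have c2R: "((\<lambda>x. ch \<phi>2R p2R x - (- \<i> * of_real (-k + - k0)) * ee k x) \<longlongrightarrow> 0) at_top"
    using chi_asym[OF a2R d2R lim_top] unfolding ch_def by simp
  obtain qb1L where b1L: "isol ?V k (ch \<phi>1L p1L) qb1L" using Btrans[OF wder i1L] unfolding ch_def by blast
  obtain qb1R where b1R: "isol ?V k (ch \<phi>1R p1R) qb1R" using Btrans[OF wder i1R] unfolding ch_def by blast
  obtain qb2R where b2R: "isol ?V k (ch \<phi>2R p2R) qb2R" using Btrans[OF wder i2R] unfolding ch_def by blast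
  define c1 where "c1 = - \<i> * of_real (k + k0)"
  define c2 where "c2 = - \<i> * of_real (k + - k0)"
  define c3 where "c3 = - \<i> * of_real (-k + - k0)"
  have e1: "ch \<phi>1L p1L x = c1 * \<phi>2L x" for x
    unfolding c1_def by (rule ident_bot[OF g k b1L i2L c1L a2L])
  have e2: "ch \<phi>1R p1R x = c2 * \<phi>2R x" for x
    unfolding c2_def by (rule ident_top[OF g k b1R i2R c1R a2R])
  have e3: "ch \<phi>2R p2R x = c3 * \<phi>1R x" for x
    unfolding c3_def by (rule ident_top[OF g k b2R i1R c2R a1R])
  have comb: "isol ?V k (\<lambda>x. M11 k * \<phi>1R x + M21 k * \<phi>2R x) (\<lambda>x. M11 k * p1R x + M21 k * p2R x)"
    by (rule isol_lin[OF i1R i2R])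
  have feq: "\<phi>1L = (\<lambda>x. M11 k * \<phi>1R x + M21 k * \<phi>2R x)" using r1 by auto
  have pd: "p1L x = M11 k * p1R x + M21 k * p2R x" for x
    using isol_unique[OF i1L comb[folded feq]] .
  have chl: "ch \<phi>1L p1L x = cnj (M11 k) * ch \<phi>1R p1R x + cnj (M21 k) * ch \<phi>2R p2R x" for x
    unfolding ch_def using pd[of x] r1 by (simp add: algebra_simps)
  define \<alpha> where "\<alpha> = c1 * M12 k - cnj (M21 k) * c3"
  define \<beta> where "\<beta> = c1 * M22 k - cnj (M11 k) * c2"
  have z: "\<alpha> * \<phi>1R x + \<beta> * \<phi>2R x = 0" for x
  proof -
    have "c1 * (M12 k * \<phi>1R x + M22 k * \<phi>2R x) = cnj (M11 k) * (c2 * \<phi>2R x) + cnj (M21 k) * (c3 * \<phi>1R x)"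
      using chl[of x] e1[of x] e2[of x] e3[of x] r2 by simp
    then show ?thesis unfolding \<alpha>_def \<beta>_def by (simp add: algebra_simps)
  qed
  have "((\<lambda>x. \<alpha> * ee k x + \<beta> * ee (-k) x) \<longlongrightarrow> 0) at_top"
  proof -
    have "((\<lambda>x. (\<alpha> * \<phi>1R x + \<beta> * \<phi>2R x) - \<alpha> * (\<phi>1R x - ee k x) - \<beta> * (\<phi>2R x - ee (-k) x))
        \<longlongrightarrow> 0 - \<alpha> * 0 - \<beta> * 0) at_top"
      by (intro tendsto_intros a1R a2R) (simp add: z)
    then show ?thesis by (simp add: algebra_simps)
  qed
  from indep[OF k this] have "\<beta> = 0" by simp
  then have "c1 * M22 k = cnj (M11 k) * c2" unfolding \<beta>_def by simp
  then have "(- \<i>) * (of_real (k + k0) * M22 k) = (- \<i>) * (cnj (M11 k) * of_real (k - k0))"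
    unfolding c1_def c2_def by (simp add: algebra_simps)
  then have "of_real (k + k0) * M22 k = cnj (M11 k) * of_real (k - k0)"
    by (subst (asm) mult_cancel_left) simp
  then have "cnj (of_real (k + k0) * M22 k) = cnj (cnj (M11 k) * of_real (k - k0))" by simp
  then show ?thesis by (simp add: mult.commute)
qed



theorem mainTheorem6:
  fixes w w' :: "real \<Rightarrow> real" and k0 :: real
    and M11 M12 M21 M22 :: "real \<Rightarrow> complex" and D :: complex
  assumes k0: "k0 > 0"
    and wder: "\<forall>x. (w has_real_derivative w' x) (at x)"
    and lim_top: "(w \<longlongrightarrow> - k0) at_top"
    and lim_bot: "(w \<longlongrightarrow> k0) at_bot"
    and short_range: "pot w w' k0 absolutely_integrable_on UNIV"
    and M: "is_transfer_matrix (pot w w' k0) M11 M12 M21 M22"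
    and M11_diff: "M11 differentiable (at k0)"
    and M22_der: "(M22 has_vector_derivative D) (at k0)"
  shows "M22 k0 = 0 \<and> M11 k0 = 2 * complex_of_real k0 * cnj D \<and> (M11 k0 = 0 \<longleftrightarrow> D = 0)"
proof -
  have g: "good (pot w w' k0)" by (rule absint_good[OF short_range])
  have K: "M11 k * of_real (k - k0) = of_real (k + k0) * cnj (M22 k)" if "k > 0" for k
    by (rule key[OF that wder lim_top lim_bot g M])
  have "of_real (k0 + k0) * cnj (M22 k0) = 0" using K[OF k0] by simp
  then have z: "M22 k0 = 0" using k0 by simp
  obtain M11' where d11: "(M11 has_vector_derivative M11') (at k0)"
    using M11_diff vector_derivative_works by blast
  have L: "((\<lambda>k. M11 k * of_real (k - k0)) has_vector_derivative
      (M11 k0 * of_real (1 - 0) + M11' * of_real (k0 - k0))) (at k0)"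
    by (intro derivative_intros d11 DERIV_ident DERIV_const)
  have R: "((\<lambda>k. of_real (k + k0) * cnj (M22 k)) has_vector_derivative
      (of_real (k0 + k0) * cnj D + of_real (1 + 0) * cnj (M22 k0))) (at k0)"
    by (intro derivative_intros has_vector_derivative_cnj M22_der DERIV_ident DERIV_const)
  have L': "((\<lambda>k. of_real (k + k0) * cnj (M22 k)) has_vector_derivative
      (M11 k0 * of_real (1 - 0) + M11' * of_real (k0 - k0))) (at k0)"
    by (rule has_vector_derivative_transform_within_open[OF L, of "{0<..}"]) (use k0 K in auto)
  have "M11 k0 * of_real (1 - 0) + M11' * of_real (k0 - k0) = of_real (k0 + k0) * cnj D + of_real (1 + 0) * cnj (M22 k0)"
    by (rule vector_derivative_unique_at[OF L' R])
  then have e: "M11 k0 = 2 * complex_of_real k0 * cnj D" using z by simp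
  have "M11 k0 = 0 \<longleftrightarrow> D = 0" using e k0 by simp
  with z e show ?thesis by simp
qed

end
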